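(* Let $\mathcal{N}$ be the Noperthedron. For all $\theta,\varphi,\alpha\in\mathbb{R}$ the following equalities of sets hold: \[ M(\theta+2\pi/15,\varphi)\mathcal{N}=M(\theta,\varphi)\mathcal{N},\qquad R(\alpha+\pi)M(\theta,\varphi)\mathcal{N}=R(\alpha)M(\theta,\varphi)\mathcal{N}, \] \[ \begin{pmatrix}1&0\\0&-1\end{pmatrix}M(\theta,\varphi)\mathcal{N}=M(\theta+\pi/15,\pi-\varphi)\mathcal{N}. \]
   Context: $R(\alpha)=\begin{pmatrix}\cos\alpha&-\sin\alpha\\ \sin\alpha&\cos\alpha\end{pmatrix}$, $M(\theta,\varphi)=\begin{pmatrix}-\sin\theta&\cos\theta&0\\ -\cos\theta\cos\varphi&-\sin\theta\cos\varphi&\sin\varphi\end{pmatrix}$, acting elementwise on point sets. Let $R_z(\beta)=\begin{pmatrix}\cos\beta&-\sin\beta&0\\ \sin\beta&\cos\beta&0\\0&0&1\end{pmatrix}$, $\mathcal{C}_{30}=\{(-1)^\ell R_z(2\pi k/15): k=0,\dots,14,\ \ell=0,1\}$, $C_1=\frac{1}{259375205}(152024884,0,210152163)^t$, $C_2=10^{-10}(6632738028,6106948881,3980949609)^t$, $C_3=10^{-10}(8193990033,5298215096,1230614493)^t$, and $\mathcal{N}=\mathcal{C}_{30}C_1\cup\mathcal{C}_{30}C_2\cup\mathcal{C}_{30}C_3$. *)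

theory Defs
  imports "HOL-Analysis.Analysis"
begin

definition rot2 :: "real \<Rightarrow> real^2^2" where
  "rot2 \<alpha> = vector [vector [cos \<alpha>, - sin \<alpha>], vector [sin \<alpha>, cos \<alpha>]]"

definition projM :: "real \<Rightarrow> real \<Rightarrow> real^3^2" where
  "projM \<theta> \<phi> = vector [vector [- sin \<theta>, cos \<theta>, 0],
                         vector [- cos \<theta> * cos \<phi>, - sin \<theta> * cos \<phi>, sin \<phi>]]"

definition rotz :: "real \<Rightarrow> real^3^3" where
  "rotz \<beta> = vector [vector [cos \<beta>, - sin \<beta>, 0], vector [sin \<beta>, cos \<beta>, 0], vector [0, 0, 1]]"

definition flip2 :: "real^2^2" where
  "flip2 = vector [vector [1, 0], vector [0, -1]]"

definition C30 :: "(real^3^3) set" where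
  "C30 = {((-1) ^ l) *\<^sub>R rotz (2 * pi * real k / 15) | k l. k < (15::nat) \<and> l < (2::nat)}"

definition C1 :: "real^3" where
  "C1 = (1 / 259375205) *\<^sub>R vector [152024884, 0, 210152163]"
definition C2 :: "real^3" where
  "C2 = (10 powi (-10)) *\<^sub>R vector [6632738028, 6106948881, 3980949609]"
definition C3 :: "real^3" where
  "C3 = (10 powi (-10)) *\<^sub>R vector [8193990033, 5298215096, 1230614493]"

definition noperthedron :: "(real^3) set" where
  "noperthedron = (\<lambda>A. A *v C1) ` C30 \<union> (\<lambda>A. A *v C2) ` C30 \<union> (\<lambda>A. A *v C3) ` C30"

end

theory Submission
  imports Defs
begin

lemma projM_rotz: "projM a p *v (rotz b *v x) = projM (a - b) p *v x"
  by (simp add: vec_eq_iff forall_2 matrix_vector_mult_def sum_3 projM_def rotz_def cos_diff sin_diff algebra_simps)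

lemma rotz_rotz: "rotz a *v (rotz b *v x) = rotz (a + b) *v x"
  by (simp add: vec_eq_iff forall_3 matrix_vector_mult_def sum_3 rotz_def cos_add sin_add algebra_simps)

lemma rotz_per: "rotz (a + 2 * pi * of_int q) = rotz a"
  by (simp add: rotz_def cos_add sin_add)

lemma rot2_pi: "rot2 (a + pi) *v y = - (rot2 a *v y)"
  by (simp add: vec_eq_iff forall_2 matrix_vector_mult_def sum_2 rot2_def)

lemma flip_projM: "flip2 *v (projM t p *v x) = - (projM (t + pi) (pi - p) *v x)"
  by (simp add: vec_eq_iff forall_2 matrix_vector_mult_def sum_3 sum_2 flip2_def projM_def)

lemma projM_neg: "projM t p *v (- x) = - (projM t p *v x)"
  by (simp add: vec_eq_iff forall_2 matrix_vector_mult_def sum_3)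

lemma rot2_neg: "rot2 a *v (- y) = - (rot2 a *v y)"
  by (simp add: vec_eq_iff forall_2 matrix_vector_mult_def sum_2)

definition T :: "int \<Rightarrow> nat \<Rightarrow> real^3 \<Rightarrow> real^3" where
  "T j m x = ((-1) ^ m) *\<^sub>R (rotz (2 * pi * of_int j / 15) *v x)"

lemma orb_iff: "y \<in> (\<lambda>A. A *v C) ` C30 \<longleftrightarrow>
   (\<exists>k l. k < (15::nat) \<and> l < (2::nat) \<and> y = ((-1) ^ l) *\<^sub>R (rotz (2 * pi * real k / 15) *v C))"
  unfolding C30_def by (auto simp: scaleR_matrix_vector_assoc)

lemma T_orb:
  assumes "y \<in> (\<lambda>A. A *v C) ` C30"
  shows "T j m y \<in> (\<lambda>A. A *v C) ` C30"
proof -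
  obtain k l where kl: "k < (15::nat)" "l < (2::nat)" "y = ((-1) ^ l) *\<^sub>R (rotz (2 * pi * real k / 15) *v C)"
    using assms orb_iff by blast
  define n where "n = j + int k"
  define r where "r = n mod 15"
  define q where "q = n div 15"
  have n: "n = 15 * q + r" unfolding q_def r_def by simp
  have r: "0 \<le> r" "r < 15" unfolding r_def by auto
  have ang: "2 * pi * of_int j / 15 + 2 * pi * real k / 15 = 2 * pi * real (nat r) / 15 + 2 * pi * of_int q"
  proof -
    have "of_int j + real k = of_int n" unfolding n_def by simp
    also have "\<dots> = 15 * of_int q + of_int r" using n by simp
    finally have "of_int j + real k = 15 * of_int q + real (nat r)" using r by simp
    then have h: "of_int j + real k = 15 * of_int q + real (nat r)" .
    have "2 * pi * of_int j / 15 + 2 * pi * real k / 15 = 2 * pi * (of_int j + real k) / 15"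
      by (simp add: field_simps)
    also have "\<dots> = 2 * pi * (15 * of_int q + real (nat r)) / 15" using h by simp
    also have "\<dots> = 2 * pi * real (nat r) / 15 + 2 * pi * of_int q" by (simp add: field_simps)
    finally show ?thesis .
  qed
  have sg: "((-1::real) ^ m) * (-1) ^ l = (-1) ^ ((m + l) mod 2)"
    by (cases "even (m+l)") (simp_all add: power_add[symmetric] odd_iff_mod_2_eq_one)
  have "T j m y = ((-1) ^ ((m + l) mod 2)) *\<^sub>R (rotz (2 * pi * real (nat r) / 15) *v C)"
    unfolding T_def kl(3) 
    by (simp add: matrix_vector_mult_scaleR rotz_rotz ang rotz_per sg[symmetric])
  then show ?thesis unfolding orb_iff using r
    by (intro exI[of _ "nat r"] exI[of _ "(m + l) mod 2"]) auto
qed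

lemma T_N: "x \<in> noperthedron \<Longrightarrow> T j m x \<in> noperthedron"
  unfolding noperthedron_def using T_orb by blast

lemma rotz0: "rotz 0 *v x = x"
  by (simp add: vec_eq_iff forall_3 matrix_vector_mult_def sum_3 rotz_def)

lemma T_inv: "T j m (T (-j) m x) = x"
proof -
  have s: "((-1::real) ^ m) * (-1) ^ m = 1" by (simp add: power_add[symmetric])
  show ?thesis unfolding T_def
    by (simp add: matrix_vector_mult_scaleR rotz_rotz rotz0 s)
qed

lemma T_img: "T j m ` noperthedron = noperthedron"
proof
  show "T j m ` noperthedron \<subseteq> noperthedron" using T_N by blast
  show "noperthedron \<subseteq> T j m ` noperthedron"
  proof
    fix x assume "x \<in> noperthedron"
    then have "T (-j) m x \<in> noperthedron" by (rule T_N)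
    then show "x \<in> T j m ` noperthedron" using T_inv[of j m x] by (metis image_eqI)
  qed
qed

lemma img_eq:
  assumes "\<And>P. f P = g (T j m P)"
  shows "f ` noperthedron = g ` noperthedron"
proof -
  have "f ` noperthedron = g ` (T j m ` noperthedron)" using assms by (auto simp: image_iff)
  then show ?thesis using T_img by simp
qed

theorem lemma2p3:
  fixes \<theta> \<phi> \<alpha> :: real
  shows "(\<lambda>P. projM (\<theta> + 2 * pi / 15) \<phi> *v P) ` noperthedron = (\<lambda>P. projM \<theta> \<phi> *v P) ` noperthedron \<and>
     (\<lambda>P. rot2 (\<alpha> + pi) *v (projM \<theta> \<phi> *v P)) ` noperthedron = (\<lambda>P. rot2 \<alpha> *v (projM \<theta> \<phi> *v P)) ` noperthedron \<and>
     (\<lambda>P. flip2 *v (projM \<theta> \<phi> *v P)) ` noperthedron = (\<lambda>P. projM (\<theta> + pi / 15) (pi - \<phi>) *v P) ` noperthedron"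
proof (intro conjI)
  show "(\<lambda>P. projM (\<theta> + 2 * pi / 15) \<phi> *v P) ` noperthedron = (\<lambda>P. projM \<theta> \<phi> *v P) ` noperthedron"
    by (rule img_eq[where j = "-1" and m = 0]) (simp add: T_def projM_rotz)
  show "(\<lambda>P. rot2 (\<alpha> + pi) *v (projM \<theta> \<phi> *v P)) ` noperthedron = (\<lambda>P. rot2 \<alpha> *v (projM \<theta> \<phi> *v P)) ` noperthedron"
    by (rule img_eq[where j = 0 and m = 1]) (simp add: T_def rotz0 rot2_pi projM_neg rot2_neg)
  show "(\<lambda>P. flip2 *v (projM \<theta> \<phi> *v P)) ` noperthedron = (\<lambda>P. projM (\<theta> + pi / 15) (pi - \<phi>) *v P) ` noperthedron"
  proof (rule img_eq[where j = "-7" and m = 1])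
    fix P
    have a: "\<theta> + pi / 15 - 2 * pi * of_int (-7::int) / 15 = \<theta> + pi" by simp
    show "flip2 *v (projM \<theta> \<phi> *v P) = projM (\<theta> + pi / 15) (pi - \<phi>) *v T (- 7) 1 P"
      unfolding T_def flip_projM
      by (simp add: projM_neg projM_rotz a del: of_int_minus)
  qed
qed
end
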